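(* Let $k_0\in\mathbb{R}\setminus\{0\}$, $N\ge 0$, and real numbers $x_1<\dots<x_N$. Put $I_0=(-\infty,x_1)$, $I_j=(x_j,x_{j+1})$ for $1\le j\le N-1$, $I_N=(x_N,\infty)$ (if $N=0$, $I_0=\mathbb{R}$). Let $w_j:I_j\to\mathbb{C}$, $j=0,\dots,N$, be continuous and piecewise differentiable, and assume: (a) for each $j=1,\dots,N$, the functions $w_j^-(x):=w_{j-1}(x)-\frac{i}{x-x_j}$ on $I_{j-1}$ and $w_j^+(x):=w_j(x)-\frac{i}{x-x_j}$ on $I_j$ are bounded as $x\to x_j-0$ and as $x\to x_j+0$, respectively; (b) $w_0(x)=k_0+\tilde w_{-\infty}(x)$ with $\tilde w_{-\infty}(x)=O(|x|^{-2})$ as $x\to-\infty$, and $w_N(x)=-k_0+\tilde w_{\infty}(x)$ with $\tilde w_\infty(x)=O(|x|^{-2})$ as $x\to+\infty$. Choose arbitrary points $X_j\in I_j$ ($j=0,\dots,N$) and an arbitrary $\rho_0\in\mathbb{C}\setminus\{0\}$, and define recursively for $j=1,\dots,N$ $$\rho_j=\rho_{j-1}\,\frac{X_j-x_j}{X_{j-1}-x_j}\exp\!\Big[i\int_{X_j}^{x_j}w_j^+(\xi)\,d\xi-i\int_{X_{j-1}}^{x_j}w_j^-(\xi)\,d\xi\Big].$$ Define $\psi_0(x)=\rho_j\exp\!\big[-i\int_{X_j}^{x}w_j(\xi)\,d\xi\big]$ for $x\in I_j$, and $\psi_0(x_j)=0$ for $j=1,\dots,N$. Then: (1) $\psi_0\in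 C^1(\mathbb{R})$; (2) there exist nonzero constants $\rho_\pm\in\mathbb{C}$ with $\lim_{x\to\pm\infty}[\psi_0(x)-\rho_\pm e^{\pm ik_0x}]=0$; (3) for each $j$, at every point of $I_j$ where $w_j$ is differentiable, $\psi_0$ satisfies $-\psi_0''+U_j(x)\psi_0=k_0^2\psi_0$ with $U_j(x)=-w_j(x)^2-i\,w_j'(x)+k_0^2$.
   Context: The integrals in the recursion are (convergent) improper integrals up to the endpoint $x_j$. A function with properties (1)–(3) is a spectral-singularity solution of the Schrödinger equation $-\psi''+U\psi=k^2\psi$ at $k=k_0$ with potential $U=-w^2-iw'+k_0^2$ (laser if $k_0>0$, coherent perfect absorber if $k_0<0$). *)

theory Defs
  imports "HOL-Analysis.Analysis"
begin

definition Ivl :: "nat \<Rightarrow> (nat \<Rightarrow> real) \<Rightarrow> nat \<Rightarrow> real set" where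
  "Ivl N x j =
     (if N = 0 then UNIV
      else if j = 0 then {..< x 1}
      else if j = N then {x N <..}
      else {x j <..< x (Suc j)})"

definition oint :: "(real \<Rightarrow> complex) \<Rightarrow> real \<Rightarrow> real \<Rightarrow> complex" where
  "oint f a b = (if a \<le> b then integral {a..b} f else - integral {b..a} f)"

end

theory Submission
  imports Defs
begin

lemma oint_anchor:
  fixes f :: "real \<Rightarrow> complex"
  assumes "m \<le> a" "m \<le> b" "f integrable_on {m..max a b}"
  shows "oint f a b = integral {m..b} f - integral {m..a} f"
proof (cases "a \<le> b")
  case True
  have "integral {m..a} f + integral {a..b} f = integral {m..b} f"
  proof (rule Henstock_Kurzweil_Integration.integral_combine)
    show "f integrable_on {m..b}" by (rule integrable_on_subinterval[OF assms(3)]) (use True in auto)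
  qed (use assms True in auto)
  then show ?thesis using True by (simp add: oint_def algebra_simps)
next
  case False
  have "integral {m..b} f + integral {b..a} f = integral {m..a} f"
  proof (rule Henstock_Kurzweil_Integration.integral_combine)
    show "f integrable_on {m..a}" by (rule integrable_on_subinterval[OF assms(3)]) (use False in auto)
  qed (use assms False in auto)
  then show ?thesis using False by (simp add: oint_def algebra_simps)
qed

lemma oint_add:
  fixes f :: "real \<Rightarrow> complex"
  assumes "convex S" "continuous_on S f" "a \<in> S" "b \<in> S" "c \<in> S"
  shows "oint f a b + oint f b c = oint f a c"
proof -
  define m where "m = min a (min b c)"
  define M where "M = max a (max b c)"
  have mS: "m \<in> S" "M \<in> S" using assms by (auto simp: m_def M_def min_def max_def)
  have sub: "{m..M} \<subseteq> S"
    using closed_segment_subset[OF mS assms(1)] mS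
    by (metis closed_segment_eq_real_ivl m_def M_def min.cobounded1 min.coboundedI2 order_trans max.cobounded1 atLeastAtMost_iff)
  have int: "f integrable_on {m..M}"
    by (rule integrable_continuous_real, rule continuous_on_subset[OF assms(2) sub])
  have i: "f integrable_on {m..max u v}" if "u \<in> {a,b,c}" "v \<in> {a,b,c}" for u v
    by (rule integrable_on_subinterval[OF int]) (use that in \<open>auto simp: M_def\<close>)
  show ?thesis
    using oint_anchor[of m a b f] oint_anchor[of m b c f] oint_anchor[of m a c f] i
    by (auto simp: m_def)
qed

lemma seg_sub: "convex S \<Longrightarrow> a \<in> S \<Longrightarrow> b \<in> S \<Longrightarrow> {min a b..max a b} \<subseteq> (S::real set)"
  by (metis closed_segment_eq_real_ivl1 closed_segment_subset min_def max_def nle_le)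

lemma oint_diff:
  fixes f g :: "real \<Rightarrow> complex"
  assumes "convex S" "continuous_on S f" "continuous_on S g" "a \<in> S" "b \<in> S"
  shows "oint (\<lambda>x. f x - g x) a b = oint f a b - oint g a b"
proof -
  have sub: "{min a b..max a b} \<subseteq> S" using seg_sub assms by blast
  have "f integrable_on {min a b..max a b}" "g integrable_on {min a b..max a b}"
    using continuous_on_subset[OF assms(2) sub] continuous_on_subset[OF assms(3) sub]
    by (auto intro: integrable_continuous_real)
  then show ?thesis
    by (auto simp: oint_def integral_diff min_def max_def split: if_splits)
qed

lemma oint_FTC:
  fixes H h :: "real \<Rightarrow> complex"
  assumes "\<And>u. u \<in> {min a b..max a b} \<Longrightarrow> (H has_vector_derivative h u) (at u)"
  shows "oint h a b = H b - H a"
proof (cases "a \<le> b")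
  case True
  have "(h has_integral (H b - H a)) {a..b}"
    by (rule fundamental_theorem_of_calculus[OF True])
       (use assms True in \<open>auto intro: has_vector_derivative_at_within\<close>)
  then show ?thesis using True by (simp add: oint_def integral_unique)
next
  case False
  have "(h has_integral (H a - H b)) {b..a}"
    by (rule fundamental_theorem_of_calculus) 
       (use assms False in \<open>auto intro: has_vector_derivative_at_within\<close>)
  then show ?thesis using False by (simp add: oint_def integral_unique)
qed

lemma oint_norm_bound:
  fixes g :: "real \<Rightarrow> complex" and h :: "real \<Rightarrow> real"
  assumes "continuous_on {min a b..max a b} g" "continuous_on {min a b..max a b} h"
    "\<And>u. u \<in> {min a b..max a b} \<Longrightarrow> norm (g u) \<le> h u"
  shows "norm (oint g a b) \<le> integral {min a b..max a b} h"
proof -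
  have "norm (integral {min a b..max a b} g) \<le> integral {min a b..max a b} h"
    by (rule integral_norm_bound_integral) (use assms in \<open>auto intro: integrable_continuous_real\<close>)
  then show ?thesis by (auto simp: oint_def min_def max_def split: if_splits)
qed

lemma oint_deriv:
  fixes f :: "real \<Rightarrow> complex"
  assumes "convex S" "open S" "continuous_on S f" "X \<in> S" "t \<in> S"
  shows "((\<lambda>u. oint f X u) has_vector_derivative f t) (at t)"
proof -
  obtain e where e: "e > 0" "ball t e \<subseteq> S" using assms openE by blast
  define m where "m = min X (t - e/2)"
  define M where "M = max X (t + e/2)"
  have mM: "m \<in> S" "M \<in> S" using e assms by (auto simp: m_def M_def min_def max_def dist_real_def)
  have sub: "{m..M} \<subseteq> S" using seg_sub[OF assms(1) mM] by (simp add: m_def M_def)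
  have cont: "continuous_on {m..M} f" using continuous_on_subset[OF assms(3) sub] .
  have tin: "t \<in> {m<..<M}" using e by (auto simp: m_def M_def)
  have d: "((\<lambda>u. integral {m..u} f) has_vector_derivative f t) (at t)"
    using integral_has_vector_derivative[OF cont, of t] tin
    by (simp add: at_within_Icc_at)
  have d2: "((\<lambda>u. integral {m..u} f - integral {m..X} f) has_vector_derivative f t) (at t)"
    using has_vector_derivative_diff[OF d has_vector_derivative_const[of "integral {m..X} f"]] by simp
  show ?thesis
  proof (rule has_vector_derivative_transform_within_open[OF d2 _ tin])
    show "open {m<..<M}" by simp
    fix u assume u: "u \<in> {m<..<M}"
    show "integral {m..u} f - integral {m..X} f = oint f X u"
      by (rule oint_anchor[symmetric])
        (use u in \<open>auto simp: m_def M_def intro!: integrable_continuous_real continuous_on_subset[OF cont]\<close>)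
  qed
qed

lemma cauchy_lim:
  fixes f :: "'b \<Rightarrow> 'a::complete_space"
  assumes "F \<noteq> bot" "\<And>e. e > 0 \<Longrightarrow> \<exists>P. eventually P F \<and> (\<forall>x y. P x \<and> P y \<longrightarrow> dist (f x) (f y) < e)"
  shows "\<exists>L. (f \<longlongrightarrow> L) F"
proof -
  have "cauchy_filter (filtermap f F)"
    using assms(2) by (subst cauchy_filter_metric_filtermap) auto
  moreover have "filtermap f F \<noteq> bot" using assms(1) by (simp add: filtermap_bot_iff)
  ultimately obtain c where "filtermap f F \<le> nhds c"
    using cauchy_filter_complete_converges[OF _ complete_UNIV] by (metis top_greatest principal_UNIV)
  then show ?thesis unfolding filterlim_def by blast
qed

lemma same_side:
  fixes S :: "real set"
  assumes "convex S" "c \<notin> S" "X \<in> S" "u \<in> S"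
  shows "sgn (X - c) * (u - c) > 0"
proof -
  have "{min X u..max X u} \<subseteq> S" using seg_sub assms by blast
  then have "\<not> (min X u \<le> c \<and> c \<le> max X u)" using assms(2) by auto
  then show ?thesis using assms by (cases "X < c") (auto simp: min_def max_def split: if_splits)
qed

lemma side_exp:
  fixes w :: "real \<Rightarrow> complex"
  assumes "convex S" "c \<notin> S" "continuous_on S w" "X \<in> S" "t \<in> S"
  shows "exp (- \<i> * oint w X t) = complex_of_real ((t - c) / (X - c)) *
            exp (- \<i> * oint (\<lambda>\<xi>. w \<xi> - \<i> / complex_of_real (\<xi> - c)) X t)"
proof -
  define s where "s = sgn (X - c)"
  have pos: "s * (u - c) > 0" if "u \<in> S" for u using same_side assms that s_def by blast
  have s0: "s \<noteq> 0" using pos[OF assms(4)] by auto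
  let ?q = "\<lambda>\<xi>. \<i> / complex_of_real (\<xi> - c)"
  have qc: "continuous_on S ?q"
    by (intro continuous_intros) (use assms(2) in auto)
  have e1: "oint (\<lambda>\<xi>. w \<xi> - ?q \<xi>) X t = oint w X t - oint ?q X t"
    by (rule oint_diff[OF assms(1,3) qc assms(4,5)])
  define H where "H u = \<i> * complex_of_real (ln (s * (u - c)))" for u
  have e2: "oint ?q X t = H t - H X"
  proof (rule oint_FTC)
    fix u assume u: "u \<in> {min X t..max X t}"
    then have uS: "u \<in> S" using seg_sub[OF assms(1,4,5)] by blast
    have "((\<lambda>u. ln (s * (u - c))) has_field_derivative (1 / (u - c))) (at u)"
    proof -
      have uc: "u - c \<noteq> 0" using uS assms(2) by auto
      have "((\<lambda>u. ln (s * (u - c))) has_field_derivative (1 / (s * (u - c)) * (s * (1 - 0)))) (at u)"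
        using pos[OF uS] by (auto intro!: derivative_eq_intros)
      moreover have "1 / (s * (u - c)) * (s * (1 - 0)) = 1 / (u - c)" using s0 uc by simp
      ultimately show ?thesis by simp
    qed
    then have "(H has_vector_derivative \<i> * complex_of_real (1 / (u - c))) (at u)"
      unfolding H_def by (rule has_vector_derivative_mult_right[OF has_vector_derivative_of_real])
    then show "(H has_vector_derivative ?q u) (at u)"
      by (simp add: divide_complex_def)
  qed
  have "exp (- \<i> * oint w X t) = exp (- \<i> * oint (\<lambda>\<xi>. w \<xi> - ?q \<xi>) X t) * exp (-\<i> * (H t - H X))"
  proof -
    have ow: "oint w X t = oint (\<lambda>\<xi>. w \<xi> - ?q \<xi>) X t + (H t - H X)"
      by (metis e1 e2 diff_add_cancel)
    show ?thesis by (subst ow) (simp only: distrib_left exp_add)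
  qed
  also have "exp (-\<i> * (H t - H X)) = complex_of_real (exp (ln (s * (t - c)) - ln (s * (X - c))))"
    by (simp add: H_def algebra_simps flip: exp_of_real of_real_diff)
  also have "\<dots> = complex_of_real ((t - c) / (X - c))"
    using pos[OF assms(5)] pos[OF assms(4)] s0 by (simp add: exp_diff)
  finally show ?thesis by (simp add: mult.commute)
qed

lemma side_lim:
  fixes w :: "real \<Rightarrow> complex"
  assumes "convex S" "c \<notin> S" "continuous_on S w" "X \<in> S" "at c within S \<noteq> bot"
    and bnd: "\<exists>B. \<forall>\<^sub>F t in at c within S. norm (w t - \<i> / complex_of_real (t - c)) \<le> B"
  shows "\<exists>L. ((\<lambda>t. oint (\<lambda>\<xi>. w \<xi> - \<i> / complex_of_real (\<xi> - c)) X t) \<longlongrightarrow> L) (at c within S)"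
proof (rule cauchy_lim[OF assms(5)])
  let ?g = "\<lambda>\<xi>. w \<xi> - \<i> / complex_of_real (\<xi> - c)"
  have gc: "continuous_on S ?g"
    by (intro continuous_intros assms(3)) (use assms(2) in auto)
  obtain B where "\<forall>\<^sub>F t in at c within S. norm (?g t) \<le> B" using bnd by blast
  then obtain d where d: "d > 0" "\<And>t. t \<in> S \<Longrightarrow> t \<noteq> c \<Longrightarrow> dist t c < d \<Longrightarrow> norm (?g t) \<le> B"
    unfolding eventually_at by blast
  fix e :: real assume e: "e > 0"
  define d' where "d' = min d (e / (2 * (\<bar>B\<bar> + 1)))"
  have d': "d' > 0" "d' \<le> d" 
    using d e by (auto simp: d'_def min_def field_simps)
  have "d' \<le> e / (2 * (\<bar>B\<bar> + 1))" by (simp add: d'_def)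
  then have d'3: "d' * (2 * (\<bar>B\<bar> + 1)) \<le> e"
    by (simp add: pos_le_divide_eq add_pos_nonneg)
  show "\<exists>P. eventually P (at c within S) \<and>
        (\<forall>x y. P x \<and> P y \<longrightarrow> dist (oint ?g X x) (oint ?g X y) < e)"
  proof (intro exI conjI allI impI)
    show "eventually (\<lambda>t. t \<in> S \<and> dist t c < d') (at c within S)"
      using d'(1) by (auto simp: eventually_at intro!: exI[of _ d'])
    fix x y assume xy: "(x \<in> S \<and> dist x c < d') \<and> y \<in> S \<and> dist y c < d'"
    have eq: "oint ?g X y + oint ?g y x = oint ?g X x"
      by (rule oint_add[OF assms(1) gc]) (use xy assms in auto)
    have "oint ?g X x - oint ?g X y = oint ?g y x" by (metis eq add_diff_cancel_left')
    then have "dist (oint ?g X x) (oint ?g X y) = norm (oint ?g y x)"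
      by (simp add: dist_norm)
    also have "\<dots> \<le> integral {min y x..max y x} (\<lambda>_. \<bar>B\<bar>)"
    proof (rule oint_norm_bound)
      have sub: "{min y x..max y x} \<subseteq> S" using seg_sub[OF assms(1)] xy by blast
      show "continuous_on {min y x..max y x} ?g" using continuous_on_subset[OF gc sub] .
      fix u assume u: "u \<in> {min y x..max y x}"
      then have "u \<in> S" using sub by blast
      moreover have "dist u c < d" using u xy d'(2) by (auto simp: dist_real_def min_def max_def split: if_splits)
      ultimately show "norm (?g u) \<le> \<bar>B\<bar>" using d(2)[of u] assms(2) by force
    qed auto
    also have "\<dots> = \<bar>x - y\<bar> * \<bar>B\<bar>" by (simp add: min_def max_def)
    also have "\<dots> < e"
    proof -
      have "\<bar>x - y\<bar> < 2 * d'" using xy by (auto simp: dist_real_def)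
      then have "\<bar>x - y\<bar> * \<bar>B\<bar> \<le> 2 * d' * \<bar>B\<bar>" by (intro mult_right_mono) auto
      also have "\<dots> < d' * (2 * (\<bar>B\<bar> + 1))" using d'(1) by (simp add: algebra_simps)
      finally show ?thesis using d'3 by linarith
    qed
    finally show "dist (oint ?g X x) (oint ?g X y) < e" .
  qed
qed

lemma int_inv_sq:
  fixes K m M :: real
  assumes "m \<le> M" "0 \<notin> {m..M}"
  shows "integral {m..M} (\<lambda>u. K / u\<^sup>2) = K / m - K / M"
proof -
  have "((\<lambda>u. K / u\<^sup>2) has_integral ((- K / M) - (- K / m))) {m..M}"
  proof (rule fundamental_theorem_of_calculus[OF assms(1)])
    fix u assume u: "u \<in> {m..M}"
    then have "u \<noteq> 0" using assms by auto
    then have "((\<lambda>u. - K / u) has_real_derivative K / u\<^sup>2) (at u)"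
      by (auto intro!: derivative_eq_intros simp: power2_eq_square field_simps)
    then show "((\<lambda>u. - K / u) has_vector_derivative K / u\<^sup>2) (at u within {m..M})"
      by (simp add: has_real_derivative_iff_has_vector_derivative has_vector_derivative_at_within)
  qed
  then show ?thesis by (simp add: integral_unique)
qed

lemma inv_sq_cauchy:
  fixes g :: "real \<Rightarrow> complex"
  assumes "convex S" "continuous_on S g" "X \<in> S" "A > 0" "x \<in> S" "y \<in> S"
    and side: "(A \<le> x \<and> A \<le> y) \<or> (x \<le> -A \<and> y \<le> -A)"
    and bnd: "\<And>u. u \<in> {min y x..max y x} \<Longrightarrow> norm (g u) \<le> C / u\<^sup>2"
  shows "norm (oint g X x - oint g X y) \<le> \<bar>C\<bar> / A"
proof -
  have eq: "oint g X y + oint g y x = oint g X x"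
    by (rule oint_add[OF assms(1,2,3,6,5)])
  have "oint g X x - oint g X y = oint g y x" by (metis eq add_diff_cancel_left')
  moreover
  define m where "m = min y x"
  define M where "M = max y x"
  have sub: "{m..M} \<subseteq> S" unfolding m_def M_def using seg_sub assms by blast
  have mM: "m \<le> M" by (simp add: m_def M_def)
  have side2: "(A \<le> m) \<or> (M \<le> -A)" using side by (auto simp: m_def M_def)
  have z: "0 \<notin> {m..M}" using side2 assms(4) by auto
  have "norm (oint g y x) \<le> integral {m..M} (\<lambda>u. \<bar>C\<bar> / u\<^sup>2)"
    unfolding m_def M_def
  proof (rule oint_norm_bound)
    show "continuous_on {min y x..max y x} g" using continuous_on_subset[OF assms(2) sub] by (simp add: m_def M_def)
    show "continuous_on {min y x..max y x} (\<lambda>u. \<bar>C\<bar> / u\<^sup>2)"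
      using z by (intro continuous_intros) (auto simp: m_def M_def)
    fix u assume u: "u \<in> {min y x..max y x}"
    have "norm (g u) \<le> C / u\<^sup>2" using bnd u by auto
    also have "\<dots> \<le> \<bar>C\<bar> / u\<^sup>2" by (intro divide_right_mono) auto
    finally show "norm (g u) \<le> \<bar>C\<bar> / u\<^sup>2" .
  qed
  also have "\<dots> = \<bar>C\<bar> / m - \<bar>C\<bar> / M" by (rule int_inv_sq[OF mM z])
  also have "\<dots> = \<bar>C\<bar> * (1 / m - 1 / M)" by (simp add: algebra_simps)
  also have "\<dots> \<le> \<bar>C\<bar> * (1 / A)"
  proof (rule mult_left_mono)
    show "1 / m - 1 / M \<le> 1 / A"
      using side2
    proof
      assume h: "A \<le> m"
      then have "0 \<le> 1 / M" using mM assms(4) by auto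
      moreover have "1 / m \<le> 1 / A" using h assms(4) by (intro divide_left_mono) auto
      ultimately show ?thesis by linarith
    next
      assume h: "M \<le> -A"
      then have "1 / m \<le> 0" using mM assms(4) by (auto simp: divide_le_0_iff)
      moreover have "- (1 / M) \<le> 1 / A"
      proof -
        have "1 / (- M) \<le> 1 / A" using h assms(4) by (intro divide_left_mono) (auto simp: mult_neg_pos)
        then show ?thesis by simp
      qed
      ultimately show ?thesis by linarith
    qed
  qed auto
  finally show ?thesis by simp
qed

lemma asym_top_lim:
  fixes w :: "real \<Rightarrow> complex" and \<kappa> :: complex
  assumes "convex S" "continuous_on S w" "X \<in> S" "{a..} \<subseteq> S"
    and bnd: "\<exists>C. \<forall>\<^sub>F t in at_top. norm (w t - \<kappa>) \<le> C / t\<^sup>2"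
  shows "\<exists>L. ((\<lambda>t. oint (\<lambda>\<xi>. w \<xi> - \<kappa>) X t) \<longlongrightarrow> L) at_top"
proof (rule cauchy_lim)
  let ?g = "\<lambda>\<xi>. w \<xi> - \<kappa>"
  have gc: "continuous_on S ?g" by (intro continuous_intros assms(2))
  obtain C A0 where CA: "\<And>t. t \<ge> A0 \<Longrightarrow> norm (w t - \<kappa>) \<le> C / t\<^sup>2"
    using bnd unfolding eventually_at_top_linorder by blast
  show "(at_top :: real filter) \<noteq> bot" by simp
  fix e :: real assume e: "e > 0"
  define A where "A = max (max A0 a) (max 1 (2 * \<bar>C\<bar> / e))"
  have A: "A > 0" "A \<ge> A0" "A \<ge> a" "2 * \<bar>C\<bar> / e \<le> A" by (auto simp: A_def)
  have CA2: "\<bar>C\<bar> / A < e"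
  proof -
    have "\<bar>C\<bar> \<le> A * e / 2" using A(4) e by (simp add: field_simps)
    then have "\<bar>C\<bar> / A \<le> e / 2" using A(1) by (simp add: field_simps)
    then show ?thesis using e by linarith
  qed
  show "\<exists>P. eventually P at_top \<and> (\<forall>x y. P x \<and> P y \<longrightarrow> dist (oint ?g X x) (oint ?g X y) < e)"
  proof (intro exI conjI allI impI)
    show "eventually (\<lambda>t. t \<ge> A) at_top" by simp
    fix x y assume xy: "A \<le> x \<and> A \<le> y"
    have "norm (oint ?g X x - oint ?g X y) \<le> \<bar>C\<bar> / A"
    proof (rule inv_sq_cauchy[OF assms(1) gc assms(3) A(1)])
      show "x \<in> S" "y \<in> S" using xy A assms(4) by auto
      fix u assume "u \<in> {min y x..max y x}"
      then have "u \<ge> A0" using xy A by auto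
      then show "norm (?g u) \<le> C / u\<^sup>2" using CA by blast
    qed (use xy in auto)
    then show "dist (oint ?g X x) (oint ?g X y) < e" using CA2 by (simp add: dist_norm)
  qed
qed

lemma asym_bot_lim:
  fixes w :: "real \<Rightarrow> complex" and \<kappa> :: complex
  assumes "convex S" "continuous_on S w" "X \<in> S" "{..a} \<subseteq> S"
    and bnd: "\<exists>C. \<forall>\<^sub>F t in at_bot. norm (w t - \<kappa>) \<le> C / t\<^sup>2"
  shows "\<exists>L. ((\<lambda>t. oint (\<lambda>\<xi>. w \<xi> - \<kappa>) X t) \<longlongrightarrow> L) at_bot"
proof (rule cauchy_lim)
  let ?g = "\<lambda>\<xi>. w \<xi> - \<kappa>"
  have gc: "continuous_on S ?g" by (intro continuous_intros assms(2))
  obtain C A0 where CA: "\<And>t. t \<le> A0 \<Longrightarrow> norm (w t - \<kappa>) \<le> C / t\<^sup>2"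
    using bnd unfolding eventually_at_bot_linorder by blast
  show "(at_bot :: real filter) \<noteq> bot" by simp
  fix e :: real assume e: "e > 0"
  define A where "A = max (max (-A0) (-a)) (max 1 (2 * \<bar>C\<bar> / e))"
  have A: "A > 0" "-A \<le> A0" "-A \<le> a" "2 * \<bar>C\<bar> / e \<le> A" by (auto simp: A_def)
  have CA2: "\<bar>C\<bar> / A < e"
  proof -
    have "\<bar>C\<bar> \<le> A * e / 2" using A(4) e by (simp add: field_simps)
    then have "\<bar>C\<bar> / A \<le> e / 2" using A(1) by (simp add: field_simps)
    then show ?thesis using e by linarith
  qed
  show "\<exists>P. eventually P at_bot \<and> (\<forall>x y. P x \<and> P y \<longrightarrow> dist (oint ?g X x) (oint ?g X y) < e)"
  proof (intro exI conjI allI impI)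
    show "eventually (\<lambda>t. t \<le> -A) at_bot" by simp
    fix x y assume xy: "x \<le> -A \<and> y \<le> -A"
    have "norm (oint ?g X x - oint ?g X y) \<le> \<bar>C\<bar> / A"
    proof (rule inv_sq_cauchy[OF assms(1) gc assms(3) A(1)])
      show "x \<in> S" "y \<in> S" using xy A assms(4) by auto
      fix u assume "u \<in> {min y x..max y x}"
      then have "u \<le> A0" using xy A by auto
      then show "norm (?g u) \<le> C / u\<^sup>2" using CA by blast
    qed (use xy in auto)
    then show "dist (oint ?g X x) (oint ?g X y) < e" using CA2 by (simp add: dist_norm)
  qed
qed

lemma oint_const: "oint (\<lambda>_. \<kappa>) X t = \<kappa> * complex_of_real (t - X)"
proof -
  have "oint (\<lambda>_. \<kappa>) X t = \<kappa> * complex_of_real t - \<kappa> * complex_of_real X"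
    by (rule oint_FTC[where H = "\<lambda>u. \<kappa> * complex_of_real u"]) (auto intro!: derivative_eq_intros)
  then show ?thesis by (simp add: algebra_simps)
qed

lemma asym_psi:
  fixes G :: "real \<Rightarrow> complex" and \<psi> :: "real \<Rightarrow> complex" and k :: real
  assumes "(G \<longlongrightarrow> L) F" "\<rho> \<noteq> 0"
    and ev: "\<forall>\<^sub>F t in F. \<psi> t = \<rho> * exp (- \<i> * (G t + complex_of_real k * complex_of_real (t - X)))"
  shows "\<exists>\<rho>'. \<rho>' \<noteq> 0 \<and> ((\<lambda>t. \<psi> t - \<rho>' * exp (- \<i> * complex_of_real (k * t))) \<longlongrightarrow> 0) F"
proof (intro exI conjI)
  define \<rho>' where "\<rho>' = \<rho> * exp (\<i> * complex_of_real (k * X)) * exp (- \<i> * L)"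
  show "\<rho>' \<noteq> 0" using assms(2) by (simp add: \<rho>'_def)
  define c where "c = \<rho> * exp (\<i> * complex_of_real (k * X))"
  have lim1: "((\<lambda>t. exp (- \<i> * G t) - exp (- \<i> * L)) \<longlongrightarrow> 0) F"
    using tendsto_exp[OF tendsto_mult[OF tendsto_const assms(1)], of "-\<i>"]
    by (simp add: LIM_zero)
  have lim2: "((\<lambda>t. exp (- \<i> * complex_of_real (k * t)) * (exp (- \<i> * G t) - exp (- \<i> * L))) \<longlongrightarrow> 0) F"
  proof (rule Lim_null_comparison[OF _ tendsto_norm_zero[OF lim1]])
    show "\<forall>\<^sub>F t in F. norm (exp (- \<i> * complex_of_real (k * t)) * (exp (- \<i> * G t) - exp (- \<i> * L)))
        \<le> norm (exp (- \<i> * G t) - exp (- \<i> * L))"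
    proof (intro always_eventually allI)
      fix t
      have "norm (exp (- \<i> * complex_of_real (k * t))) = 1"
        using norm_exp_i_times[of "- (k * t)"] by simp
      then show "norm (exp (- \<i> * complex_of_real (k * t)) * (exp (- \<i> * G t) - exp (- \<i> * L)))
        \<le> norm (exp (- \<i> * G t) - exp (- \<i> * L))" by (simp add: norm_mult)
    qed
  qed
  have lim3: "((\<lambda>t. c * (exp (- \<i> * complex_of_real (k * t)) * (exp (- \<i> * G t) - exp (- \<i> * L)))) \<longlongrightarrow> 0) F"
    using tendsto_mult[OF tendsto_const lim2, of c] by simp
  show "((\<lambda>t. \<psi> t - \<rho>' * exp (- \<i> * complex_of_real (k * t))) \<longlongrightarrow> 0) F"
  proof (rule Lim_transform_eventually[OF lim3])
    show "\<forall>\<^sub>F t in F. c * (exp (- \<i> * complex_of_real (k * t)) * (exp (- \<i> * G t) - exp (- \<i> * L))) =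
       \<psi> t - \<rho>' * exp (- \<i> * complex_of_real (k * t))"
      using ev
    proof eventually_elim
      case (elim t)
      have "- \<i> * (G t + complex_of_real k * complex_of_real (t - X)) =
            \<i> * complex_of_real (k * X) + - \<i> * complex_of_real (k * t) + - \<i> * G t"
        by (simp add: algebra_simps)
      then show ?case unfolding elim \<rho>'_def c_def
        by (simp only: exp_add) (simp add: algebra_simps)
    qed
  qed
qed

lemma interior_deriv:
  fixes w \<psi> :: "real \<Rightarrow> complex"
  assumes "convex S" "open S" "continuous_on S w" "X \<in> S" "t \<in> S"
    and \<psi>: "\<And>t. t \<in> S \<Longrightarrow> \<psi> t = \<rho> * exp (- \<i> * oint w X t)"
  shows "(\<psi> has_vector_derivative (- \<i> * w t * \<psi> t)) (at t)"
proof -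
  have d: "((\<lambda>u. oint w X u) has_vector_derivative w t) (at t)" by (rule oint_deriv[OF assms(1-5)])
  have "((exp \<circ> (\<lambda>u. - \<i> * oint w X u)) has_vector_derivative
         (- \<i> * w t) * exp (- \<i> * oint w X t)) (at t)"
    by (rule field_vector_diff_chain_at[OF has_vector_derivative_mult_right[OF d]]) (rule DERIV_exp)
  then have "((\<lambda>u. \<rho> * exp (- \<i> * oint w X u)) has_vector_derivative
         \<rho> * ((- \<i> * w t) * exp (- \<i> * oint w X t))) (at t)"
    by (intro has_vector_derivative_mult_right) (simp add: o_def)
  then have "((\<lambda>u. \<rho> * exp (- \<i> * oint w X u)) has_vector_derivative (- \<i> * w t * \<psi> t)) (at t)"
    using \<psi>[OF assms(5)] by (simp add: algebra_simps)
  then show ?thesis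
    by (rule has_vector_derivative_transform_within_open[OF _ assms(2,5)]) (use \<psi> in auto)
qed

lemma deriv_from_quot:
  fixes \<psi> :: "real \<Rightarrow> complex"
  assumes "\<psi> c = 0" "((\<lambda>t. \<psi> t / complex_of_real (t - c)) \<longlongrightarrow> K) (at c)"
  shows "(\<psi> has_vector_derivative K) (at c)"
proof -
  have re: "((\<lambda>t. (Re (\<psi> t) - Re (\<psi> c)) / (t - c)) \<longlongrightarrow> Re K) (at c)"
    using tendsto_Re[OF assms(2)] assms(1) by (simp add: Re_divide_of_real)
  have im: "((\<lambda>t. (Im (\<psi> t) - Im (\<psi> c)) / (t - c)) \<longlongrightarrow> Im K) (at c)"
    using tendsto_Im[OF assms(2)] assms(1) by (simp add: Im_divide_of_real)
  show ?thesis
    unfolding has_vector_derivative_complex_iff has_field_derivative_iff using re im by auto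
qed

lemma side_all:
  fixes w \<psi> :: "real \<Rightarrow> complex"
  assumes S: "convex S" "open S" "c \<notin> S" and wc: "continuous_on S w" and XS: "X \<in> S"
    and nb: "at c within S \<noteq> bot"
    and bnd: "\<exists>B. \<forall>\<^sub>F t in at c within S. norm (w t - \<i> / complex_of_real (t - c)) \<le> B"
    and \<psi>: "\<And>t. t \<in> S \<Longrightarrow> \<psi> t = \<rho> * exp (- \<i> * oint w X t)"
  shows "\<exists>L. ((\<lambda>t. oint (\<lambda>\<xi>. w \<xi> - \<i> / complex_of_real (\<xi> - c)) X t) \<longlongrightarrow> L) (at c within S)
     \<and> ((\<lambda>t. \<psi> t / complex_of_real (t - c)) \<longlongrightarrow> \<rho> / complex_of_real (X - c) * exp (- \<i> * L)) (at c within S)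
     \<and> ((\<lambda>t. vector_derivative \<psi> (at t)) \<longlongrightarrow> \<rho> / complex_of_real (X - c) * exp (- \<i> * L)) (at c within S)"
proof -
  let ?g = "\<lambda>\<xi>. w \<xi> - \<i> / complex_of_real (\<xi> - c)"
  let ?G = "\<lambda>t. oint ?g X t"
  let ?F = "at c within S"
  obtain L where L: "(?G \<longlongrightarrow> L) ?F"
    using side_lim[OF S(1,3) wc XS nb bnd] by blast
  define K where "K = \<rho> / complex_of_real (X - c) * exp (- \<i> * L)"
  have evS: "\<forall>\<^sub>F t in ?F. t \<in> S" by (simp add: eventually_at_filter)
  have q: "\<psi> t / complex_of_real (t - c) = \<rho> / complex_of_real (X - c) * exp (- \<i> * ?G t)" if t: "t \<in> S" for t
  proof -
    have tc: "complex_of_real t - complex_of_real c \<noteq> 0" using t S(3) by auto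
    have xc: "complex_of_real X - complex_of_real c \<noteq> 0" using XS S(3) by auto
    have "\<psi> t = \<rho> * complex_of_real ((t - c) / (X - c)) * exp (- \<i> * ?G t)"
      using \<psi>[OF t] side_exp[OF S(1,3) wc XS t] by simp
    then show ?thesis using tc xc by (simp add: field_simps)
  qed
  have limq: "((\<lambda>t. \<psi> t / complex_of_real (t - c)) \<longlongrightarrow> K) ?F"
  proof (rule Lim_transform_eventually)
    show "((\<lambda>t. \<rho> / complex_of_real (X - c) * exp (- \<i> * ?G t)) \<longlongrightarrow> K) ?F"
      unfolding K_def by (intro tendsto_intros L)
    show "\<forall>\<^sub>F t in ?F. \<rho> / complex_of_real (X - c) * exp (- \<i> * ?G t) = \<psi> t / complex_of_real (t - c)"
      using evS by eventually_elim (metis q)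
  qed
  have limc: "((\<lambda>t. complex_of_real (t - c)) \<longlongrightarrow> 0) ?F"
  proof -
    have "((\<lambda>t. t - c) \<longlongrightarrow> c - c) ?F" by (intro tendsto_intros)
    then show ?thesis using tendsto_of_real by fastforce
  qed
  have lim0: "(\<psi> \<longlongrightarrow> 0) ?F"
  proof (rule Lim_transform_eventually)
    show "((\<lambda>t. complex_of_real (t - c) * (\<psi> t / complex_of_real (t - c))) \<longlongrightarrow> 0) ?F"
      using tendsto_mult[OF limc limq] by simp
    show "\<forall>\<^sub>F t in ?F. complex_of_real (t - c) * (\<psi> t / complex_of_real (t - c)) = \<psi> t"
      using evS by eventually_elim (use S(3) in auto)
  qed
  obtain B where B: "\<forall>\<^sub>F t in ?F. norm (?g t) \<le> B" using bnd by blast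
  have limgp: "((\<lambda>t. - \<i> * ?g t * \<psi> t) \<longlongrightarrow> 0) ?F"
  proof (rule Lim_null_comparison)
    show "\<forall>\<^sub>F t in ?F. norm (- \<i> * ?g t * \<psi> t) \<le> B * norm (\<psi> t)"
      using B by eventually_elim (simp add: norm_mult mult_right_mono)
    show "((\<lambda>t. B * norm (\<psi> t)) \<longlongrightarrow> 0) ?F"
      using tendsto_mult[OF tendsto_const tendsto_norm_zero[OF lim0], of B] by simp
  qed
  have limd: "((\<lambda>t. vector_derivative \<psi> (at t)) \<longlongrightarrow> K) ?F"
  proof (rule Lim_transform_eventually)
    show "((\<lambda>t. \<psi> t / complex_of_real (t - c) + - \<i> * ?g t * \<psi> t) \<longlongrightarrow> K) ?F"
      using tendsto_add[OF limq limgp] by simp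
    show "\<forall>\<^sub>F t in ?F. \<psi> t / complex_of_real (t - c) + - \<i> * ?g t * \<psi> t = vector_derivative \<psi> (at t)"
      using evS
    proof eventually_elim
      case (elim t)
      have tc: "complex_of_real t - complex_of_real c \<noteq> 0" using elim S(3) by auto
      have "vector_derivative \<psi> (at t) = - \<i> * w t * \<psi> t"
        by (rule vector_derivative_at[OF interior_deriv[OF S(1,2) wc XS elim \<psi>]])
      moreover have "- \<i> * (w t - \<i> / complex_of_real (t - c)) * \<psi> t
          = - \<i> * w t * \<psi> t - \<psi> t / complex_of_real (t - c)"
        by (simp add: algebra_simps)
      ultimately show ?case by simp
    qed
  qed
  show ?thesis using L limq limd unfolding K_def by blast
qed

lemma aux_field: "(a::complex) \<noteq> 0 \<Longrightarrow> (r * (a / b) * E) / a * F = r / b * (E * F)"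
  by (cases "b = 0") (simp_all add: field_simps)

lemma breakpoint:
  fixes wl wr \<psi> :: "real \<Rightarrow> complex" and c :: real
  assumes SL: "convex SL" "open SL" "SL \<subseteq> {..<c}"
    and SR: "convex SR" "open SR" "SR \<subseteq> {c<..}"
    and \<delta>: "\<delta> > 0" "{c-\<delta><..<c} \<subseteq> SL" "{c<..<c+\<delta>} \<subseteq> SR"
    and wlc: "continuous_on SL wl" and wrc: "continuous_on SR wr"
    and XL: "XL \<in> SL" and XR: "XR \<in> SR"
    and bl: "\<exists>B. \<forall>\<^sub>F t in at_left c. norm (wl t - \<i> / complex_of_real (t - c)) \<le> B"
    and br: "\<exists>B. \<forall>\<^sub>F t in at_right c. norm (wr t - \<i> / complex_of_real (t - c)) \<le> B"
    and \<psi>L: "\<And>t. t \<in> SL \<Longrightarrow> \<psi> t = \<rho>l * exp (- \<i> * oint wl XL t)"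
    and \<psi>R: "\<And>t. t \<in> SR \<Longrightarrow> \<psi> t = \<rho>r * exp (- \<i> * oint wr XR t)"
    and \<psi>c: "\<psi> c = 0"
    and rec: "\<rho>r = \<rho>l * complex_of_real ((XR - c) / (XL - c)) *
            exp (\<i> * Lim (at_right c) (\<lambda>t. oint (\<lambda>\<xi>. wr \<xi> - \<i> / complex_of_real (\<xi> - c)) XR t)
                 - \<i> * Lim (at_left c) (\<lambda>t. oint (\<lambda>\<xi>. wl \<xi> - \<i> / complex_of_real (\<xi> - c)) XL t))"
  shows "\<exists>K. (\<psi> has_vector_derivative K) (at c) \<and> ((\<lambda>t. vector_derivative \<psi> (at t)) \<longlongrightarrow> K) (at c)"
proof -
  have FL: "at c within SL = at_left c"
    by (rule at_within_nhd[of c "ball c \<delta>"]) (use \<delta> SL in \<open>auto simp: dist_real_def\<close>)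
  have FR: "at c within SR = at_right c"
    by (rule at_within_nhd[of c "ball c \<delta>"]) (use \<delta> SR in \<open>auto simp: dist_real_def\<close>)
  have cL: "c \<notin> SL" using SL by auto
  have cR: "c \<notin> SR" using SR by auto
  obtain LL where LL:
    "((\<lambda>t. oint (\<lambda>\<xi>. wl \<xi> - \<i> / complex_of_real (\<xi> - c)) XL t) \<longlongrightarrow> LL) (at_left c)"
    "((\<lambda>t. \<psi> t / complex_of_real (t - c)) \<longlongrightarrow> \<rho>l / complex_of_real (XL - c) * exp (- \<i> * LL)) (at_left c)"
    "((\<lambda>t. vector_derivative \<psi> (at t)) \<longlongrightarrow> \<rho>l / complex_of_real (XL - c) * exp (- \<i> * LL)) (at_left c)"
    using side_all[OF SL(1,2) cL wlc XL, of \<psi> \<rho>l] bl \<psi>L unfolding FL by auto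
  obtain LR where LR:
    "((\<lambda>t. oint (\<lambda>\<xi>. wr \<xi> - \<i> / complex_of_real (\<xi> - c)) XR t) \<longlongrightarrow> LR) (at_right c)"
    "((\<lambda>t. \<psi> t / complex_of_real (t - c)) \<longlongrightarrow> \<rho>r / complex_of_real (XR - c) * exp (- \<i> * LR)) (at_right c)"
    "((\<lambda>t. vector_derivative \<psi> (at t)) \<longlongrightarrow> \<rho>r / complex_of_real (XR - c) * exp (- \<i> * LR)) (at_right c)"
    using side_all[OF SR(1,2) cR wrc XR, of \<psi> \<rho>r] br \<psi>R unfolding FR by auto
  have limL: "Lim (at_left c) (\<lambda>t. oint (\<lambda>\<xi>. wl \<xi> - \<i> / complex_of_real (\<xi> - c)) XL t) = LL"
    by (rule tendsto_Lim[OF _ LL(1)]) simp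
  have limR: "Lim (at_right c) (\<lambda>t. oint (\<lambda>\<xi>. wr \<xi> - \<i> / complex_of_real (\<xi> - c)) XR t) = LR"
    by (rule tendsto_Lim[OF _ LR(1)]) simp
  define K where "K = \<rho>l / complex_of_real (XL - c) * exp (- \<i> * LL)"
  have xr: "complex_of_real (XR - c) \<noteq> 0" using XR cR by auto
  have xl: "complex_of_real (XL - c) \<noteq> 0" using XL cL by auto
  have KR: "\<rho>r / complex_of_real (XR - c) * exp (- \<i> * LR) = K"
  proof -
    have "\<rho>r / complex_of_real (XR - c) * exp (- \<i> * LR)
        = \<rho>l / complex_of_real (XL - c) * (exp (\<i> * LR - \<i> * LL) * exp (- \<i> * LR))"
      unfolding rec limL limR of_real_divide using aux_field[OF xr] by blast
    also have "exp (\<i> * LR - \<i> * LL) * exp (- \<i> * LR) = exp (- \<i> * LL)"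
      by (simp flip: exp_add)
    finally show ?thesis by (simp add: K_def)
  qed
  have q: "((\<lambda>t. \<psi> t / complex_of_real (t - c)) \<longlongrightarrow> K) (at c)"
    using LL(2) LR(2) unfolding KR K_def filterlim_at_split by simp
  have d: "((\<lambda>t. vector_derivative \<psi> (at t)) \<longlongrightarrow> K) (at c)"
    using LL(3) LR(3) unfolding KR K_def filterlim_at_split by simp
  show ?thesis using deriv_from_quot[OF \<psi>c q] d by blast
qed

lemma Ivl_open: "open (Ivl N x j)"
  by (simp add: Ivl_def)

lemma Ivl_convex: "convex (Ivl N x j)"
  by (simp add: Ivl_def convex_real_interval)

lemma Ivl_break:
  assumes xm: "strict_mono_on {1..N} x" and j: "1 \<le> j" "j \<le> N"
  shows "Ivl N x j \<subseteq> {x j<..}" "Ivl N x (j - 1) \<subseteq> {..<x j}"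
    "\<exists>\<delta>>0. {x j - \<delta><..<x j} \<subseteq> Ivl N x (j - 1) \<and> {x j<..<x j + \<delta>} \<subseteq> Ivl N x j"
proof -
  have N: "N \<noteq> 0" using j by auto
  show "Ivl N x j \<subseteq> {x j<..}" using j by (auto simp: Ivl_def)
  show "Ivl N x (j - 1) \<subseteq> {..<x j}"
  proof (cases "j = 1")
    case True then show ?thesis using N by (auto simp: Ivl_def)
  next
    case False then show ?thesis using N j by (auto simp: Ivl_def)
  qed
  define dr where "dr = (if j = N then 1 else x (Suc j) - x j)"
  define dl where "dl = (if j = 1 then 1 else x j - x (j - 1))"
  have dr: "dr > 0" using strict_mono_onD[OF xm, of j "Suc j"] j by (auto simp: dr_def)
  have dl: "dl > 0" using strict_mono_onD[OF xm, of "j - 1" j] j by (auto simp: dl_def) arith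
  have R: "{x j<..<x j + dr} \<subseteq> Ivl N x j" using j by (auto simp: Ivl_def dr_def)
  have L: "{x j - dl<..<x j} \<subseteq> Ivl N x (j - 1)"
  proof (cases "j = 1")
    case True then show ?thesis using N by (auto simp: Ivl_def dl_def)
  next
    case False then show ?thesis using N j by (auto simp: Ivl_def dl_def)
  qed
  show "\<exists>\<delta>>0. {x j - \<delta><..<x j} \<subseteq> Ivl N x (j - 1) \<and> {x j<..<x j + \<delta>} \<subseteq> Ivl N x j"
  proof (rule exI[of _ "min dl dr"], intro conjI subsetI)
    fix t assume "t \<in> {x j - min dl dr<..<x j}"
    then have "t \<in> {x j - dl<..<x j}" by auto
    then show "t \<in> Ivl N x (j - 1)" using L by blast
  next
    fix t assume "t \<in> {x j<..<x j + min dl dr}"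
    then have "t \<in> {x j<..<x j + dr}" by auto
    then show "t \<in> Ivl N x j" using R by blast
  qed (use dl dr in auto)
qed

lemma Ivl_cover:
  assumes xm: "strict_mono_on {1..N} x"
  shows "(\<exists>j\<le>N. t \<in> Ivl N x j) \<or> (\<exists>j. 1 \<le> j \<and> j \<le> N \<and> t = x j)"
proof (cases "N = 0")
  case True then show ?thesis by (auto simp: Ivl_def)
next
  case N: False
  show ?thesis
  proof (cases "t < x 1")
    case True then show ?thesis using N by (intro disjI1 exI[of _ 0]) (auto simp: Ivl_def)
  next
    case False
    define A where "A = {i \<in> {1..N}. x i \<le> t}"
    have A: "finite A" "1 \<in> A" using False N by (auto simp: A_def)
    define j where "j = Max A"
    have jA: "j \<in> A" using A unfolding j_def by (intro Max_in) auto
    have jmax: "i \<in> A \<Longrightarrow> i \<le> j" for i using A by (simp add: j_def)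
    have j1: "1 \<le> j" "j \<le> N" "x j \<le> t" using jA by (auto simp: A_def)
    show ?thesis
    proof (cases "x j = t")
      case True then show ?thesis using j1 by blast
    next
      case False
      then have lt: "x j < t" using j1 by auto
      show ?thesis
      proof (cases "j = N")
        case True then show ?thesis using lt N by (intro disjI1 exI[of _ N]) (auto simp: Ivl_def)
      next
        case jN: False
        have "Suc j \<notin> A" using jmax by fastforce
        then have "t < x (Suc j)" using j1 jN by (auto simp: A_def)
        then show ?thesis using lt j1 jN N by (intro disjI1 exI[of _ j]) (auto simp: Ivl_def)
      qed
    qed
  qed
qed

lemma Ivl_top: "\<exists>a. {a..} \<subseteq> Ivl N x N"
  by (rule exI[of _ "x N + 1"]) (auto simp: Ivl_def)

lemma Ivl_bot: "\<exists>a. {..a} \<subseteq> Ivl N x 0"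
  by (rule exI[of _ "x 1 - 1"]) (auto simp: Ivl_def)

theorem theorem2:
  fixes k0 :: real and N :: nat and x :: "nat \<Rightarrow> real"
    and w :: "nat \<Rightarrow> real \<Rightarrow> complex" and X :: "nat \<Rightarrow> real"
    and \<rho>0 :: complex and \<rho> :: "nat \<Rightarrow> complex" and \<psi>0 :: "real \<Rightarrow> complex"
  assumes k0: "k0 \<noteq> 0"
    and x_mono: "strict_mono_on {1..N} x"
    and w_cont: "\<And>j. j \<le> N \<Longrightarrow> continuous_on (Ivl N x j) (w j)"
    and w_pw: "\<And>j a b. j \<le> N \<Longrightarrow> {a..b} \<subseteq> Ivl N x j \<Longrightarrow>
                  w j piecewise_differentiable_on {a..b}"
    and bnd_minus: "\<And>j. 1 \<le> j \<Longrightarrow> j \<le> N \<Longrightarrow>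
          \<exists>B. \<forall>\<^sub>F t in at_left (x j). norm (w (j - 1) t - \<i> / complex_of_real (t - x j)) \<le> B"
    and bnd_plus: "\<And>j. 1 \<le> j \<Longrightarrow> j \<le> N \<Longrightarrow>
          \<exists>B. \<forall>\<^sub>F t in at_right (x j). norm (w j t - \<i> / complex_of_real (t - x j)) \<le> B"
    and asym_bot: "\<exists>C. \<forall>\<^sub>F t in at_bot. norm (w 0 t - complex_of_real k0) \<le> C / t\<^sup>2"
    and asym_top: "\<exists>C. \<forall>\<^sub>F t in at_top. norm (w N t + complex_of_real k0) \<le> C / t\<^sup>2"
    and X_in: "\<And>j. j \<le> N \<Longrightarrow> X j \<in> Ivl N x j"
    and \<rho>0: "\<rho>0 \<noteq> 0"
    and \<rho>_0: "\<rho> 0 = \<rho>0"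
    and \<rho>_rec: "\<And>j. 1 \<le> j \<Longrightarrow> j \<le> N \<Longrightarrow>
          \<rho> j = \<rho> (j - 1) * complex_of_real ((X j - x j) / (X (j - 1) - x j)) *
            exp (\<i> * Lim (at_right (x j))
                       (\<lambda>t. oint (\<lambda>\<xi>. w j \<xi> - \<i> / complex_of_real (\<xi> - x j)) (X j) t)
                 - \<i> * Lim (at_left (x j))
                       (\<lambda>t. oint (\<lambda>\<xi>. w (j - 1) \<xi> - \<i> / complex_of_real (\<xi> - x j)) (X (j - 1)) t))"
    and \<psi>0_I: "\<And>j t. j \<le> N \<Longrightarrow> t \<in> Ivl N x j \<Longrightarrow>
          \<psi>0 t = \<rho> j * exp (- \<i> * oint (w j) (X j) t)"
    and \<psi>0_pts: "\<And>j. 1 \<le> j \<Longrightarrow> j \<le> N \<Longrightarrow> \<psi>0 (x j) = 0"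
  shows "\<psi>0 C1_differentiable_on UNIV
    \<and> (\<exists>\<rho>p \<rho>m. \<rho>p \<noteq> 0 \<and> \<rho>m \<noteq> 0
         \<and> ((\<lambda>t. \<psi>0 t - \<rho>p * exp (\<i> * complex_of_real (k0 * t))) \<longlongrightarrow> 0) at_top
         \<and> ((\<lambda>t. \<psi>0 t - \<rho>m * exp (- \<i> * complex_of_real (k0 * t))) \<longlongrightarrow> 0) at_bot)
    \<and> (\<forall>j\<le>N. \<forall>y\<in>Ivl N x j. w j differentiable (at y) \<longrightarrow>
         (\<exists>\<psi>2. ((\<lambda>t. vector_derivative \<psi>0 (at t)) has_vector_derivative \<psi>2) (at y)
            \<and> - \<psi>2 + (- (w j y)\<^sup>2 - \<i> * vector_derivative (w j) (at y) + complex_of_real (k0\<^sup>2)) * \<psi>0 y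
                = complex_of_real (k0\<^sup>2) * \<psi>0 y))"
proof -
  let ?S = "Ivl N x"
  have Sc: "convex (?S j)" "open (?S j)" for j by (rule Ivl_convex, rule Ivl_open)
  have \<rho>nz: "j \<le> N \<Longrightarrow> \<rho> j \<noteq> 0" for j
  proof (induction j)
    case 0 then show ?case using \<rho>_0 \<rho>0 by simp
  next
    case (Suc j)
    have b: "?S (Suc j) \<subseteq> {x (Suc j)<..}" "?S (Suc j - 1) \<subseteq> {..<x (Suc j)}"
      using Ivl_break[OF x_mono, of "Suc j"] Suc.prems by auto
    have "X (Suc j) - x (Suc j) \<noteq> 0" using X_in[OF Suc.prems] b by auto
    moreover have "X j - x (Suc j) \<noteq> 0" using X_in[of j] Suc.prems b by auto
    ultimately show ?case using \<rho>_rec[of "Suc j"] Suc by simp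
  qed
  have dint: "(\<psi>0 has_vector_derivative (- \<i> * w j t * \<psi>0 t)) (at t)" if "j \<le> N" "t \<in> ?S j" for j t
    by (rule interior_deriv[OF Sc w_cont[OF that(1)] X_in[OF that(1)] that(2)]) (use \<psi>0_I that in auto)
  have dbrk: "\<exists>K. (\<psi>0 has_vector_derivative K) (at (x j)) \<and>
                 ((\<lambda>t. vector_derivative \<psi>0 (at t)) \<longlongrightarrow> K) (at (x j))"
    if j: "1 \<le> j" "j \<le> N" for j
  proof -
    obtain \<delta> where \<delta>: "\<delta> > 0" "{x j - \<delta><..<x j} \<subseteq> ?S (j - 1)" "{x j<..<x j + \<delta>} \<subseteq> ?S j"
      using Ivl_break(3)[OF x_mono j] by blast
    have jm: "j - 1 \<le> N" using j by auto
    show ?thesis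
    proof (rule breakpoint[OF Sc(1,2) Ivl_break(2)[OF x_mono j] Sc(1,2) Ivl_break(1)[OF x_mono j] \<delta>
          w_cont[OF jm] w_cont[OF j(2)] X_in[OF jm] X_in[OF j(2)]])
      show "\<exists>B. \<forall>\<^sub>F t in at_left (x j). norm (w (j - 1) t - \<i> / complex_of_real (t - x j)) \<le> B"
        using bnd_minus[OF j] .
      show "\<exists>B. \<forall>\<^sub>F t in at_right (x j). norm (w j t - \<i> / complex_of_real (t - x j)) \<le> B"
        using bnd_plus[OF j] .
      show "\<psi>0 t = \<rho> (j - 1) * exp (- \<i> * oint (w (j - 1)) (X (j - 1)) t)" if "t \<in> ?S (j - 1)" for t
        using \<psi>0_I[OF jm that] .
      show "\<psi>0 t = \<rho> j * exp (- \<i> * oint (w j) (X j) t)" if "t \<in> ?S j" for t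
        using \<psi>0_I[OF j(2) that] .
      show "\<psi>0 (x j) = 0" using \<psi>0_pts[OF j] .
      show "\<rho> j = \<rho> (j - 1) * complex_of_real ((X j - x j) / (X (j - 1) - x j)) *
            exp (\<i> * Lim (at_right (x j))
                       (\<lambda>t. oint (\<lambda>\<xi>. w j \<xi> - \<i> / complex_of_real (\<xi> - x j)) (X j) t)
                 - \<i> * Lim (at_left (x j))
                       (\<lambda>t. oint (\<lambda>\<xi>. w (j - 1) \<xi> - \<i> / complex_of_real (\<xi> - x j)) (X (j - 1)) t))"
        using \<rho>_rec[OF j] .
    qed
  qed
  have P1: "\<psi>0 C1_differentiable_on UNIV"
    unfolding C1_differentiable_on_eq
  proof (intro conjI ballI)
    fix t :: real
    consider (I) j where "j \<le> N" "t \<in> ?S j" | (B) j where "1 \<le> j" "j \<le> N" "t = x j"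
      using Ivl_cover[OF x_mono, of t] by blast
    then show "\<psi>0 differentiable at t"
    proof cases
      case I then show ?thesis using differentiableI_vector[OF dint[OF I]] by simp
    next
      case B
      obtain K where "(\<psi>0 has_vector_derivative K) (at (x j))" using dbrk[OF B(1,2)] by blast
      then show ?thesis unfolding B(3) by (rule differentiableI_vector)
    qed
  next
    show "continuous_on UNIV (\<lambda>t. vector_derivative \<psi>0 (at t))"
    proof (subst continuous_on_eq_continuous_at, simp, intro ballI)
      fix t :: real
      consider (I) j where "j \<le> N" "t \<in> ?S j" | (B) j where "1 \<le> j" "j \<le> N" "t = x j"
        using Ivl_cover[OF x_mono, of t] by blast
      then show "isCont (\<lambda>t. vector_derivative \<psi>0 (at t)) t"
      proof cases
        case I
        have vd: "vector_derivative \<psi>0 (at u) = - \<i> * w j u * \<psi>0 u" if "u \<in> ?S j" for u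
          by (rule vector_derivative_at[OF dint[OF I(1) that]])
        have cw: "isCont (w j) t"
          using w_cont[OF I(1)] Sc(2) I(2) by (simp add: continuous_on_eq_continuous_at)
        have cp: "isCont \<psi>0 t"
          using dint[OF I] by (rule has_vector_derivative_continuous)
        have ch: "isCont (\<lambda>u. - \<i> * w j u * \<psi>0 u) t" by (intro continuous_intros cw cp)
        show ?thesis unfolding isCont_def
        proof (rule Lim_transform_eventually)
          show "((\<lambda>u. - \<i> * w j u * \<psi>0 u) \<longlongrightarrow> vector_derivative \<psi>0 (at t)) (at t)"
            using ch unfolding isCont_def vd[OF I(2)] .
          show "\<forall>\<^sub>F u in at t. - \<i> * w j u * \<psi>0 u = vector_derivative \<psi>0 (at u)"
            using eventually_at_in_open'[OF Sc(2) I(2)] by eventually_elim (simp add: vd)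
        qed
      next
        case B
        obtain K where K: "(\<psi>0 has_vector_derivative K) (at (x j))"
          "((\<lambda>t. vector_derivative \<psi>0 (at t)) \<longlongrightarrow> K) (at (x j))"
          using dbrk[OF B(1,2)] by blast
        show ?thesis unfolding isCont_def B(3) using K(2) vector_derivative_at[OF K(1)] by simp
      qed
    qed
  qed
  have P2: "\<exists>\<rho>p \<rho>m. \<rho>p \<noteq> 0 \<and> \<rho>m \<noteq> 0
         \<and> ((\<lambda>t. \<psi>0 t - \<rho>p * exp (\<i> * complex_of_real (k0 * t))) \<longlongrightarrow> 0) at_top
         \<and> ((\<lambda>t. \<psi>0 t - \<rho>m * exp (- \<i> * complex_of_real (k0 * t))) \<longlongrightarrow> 0) at_bot"
  proof -
    obtain a where a: "{a..} \<subseteq> ?S N" using Ivl_top by blast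
    have bndT: "\<exists>C. \<forall>\<^sub>F t in at_top. norm (w N t - (- complex_of_real k0)) \<le> C / t\<^sup>2"
      using asym_top by simp
    obtain LT where LT: "((\<lambda>t. oint (\<lambda>\<xi>. w N \<xi> - (- complex_of_real k0)) (X N) t) \<longlongrightarrow> LT) at_top"
      using asym_top_lim[OF Sc(1) w_cont[OF order_refl] X_in[OF order_refl] a bndT] by blast
    have evT: "\<forall>\<^sub>F t in at_top. \<psi>0 t = \<rho> N * exp (- \<i> * (oint (\<lambda>\<xi>. w N \<xi> - (- complex_of_real k0)) (X N) t
                 + complex_of_real (- k0) * complex_of_real (t - X N)))"
      using eventually_ge_at_top[of a]
    proof eventually_elim
      case (elim t)
      then have tS: "t \<in> ?S N" using a by auto
      have "oint (\<lambda>\<xi>. w N \<xi> - (- complex_of_real k0)) (X N) t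
            = oint (w N) (X N) t - oint (\<lambda>_. - complex_of_real k0) (X N) t"
        by (rule oint_diff[OF Sc(1) w_cont[OF order_refl] continuous_on_const X_in[OF order_refl] tS])
      then have "oint (w N) (X N) t = oint (\<lambda>\<xi>. w N \<xi> - (- complex_of_real k0)) (X N) t
                 + complex_of_real (- k0) * complex_of_real (t - X N)"
        by (simp add: oint_const)
      then show ?case using \<psi>0_I[OF order_refl tS] by simp
    qed
    obtain \<rho>p where \<rho>p: "\<rho>p \<noteq> 0" "((\<lambda>t. \<psi>0 t - \<rho>p * exp (- \<i> * complex_of_real (- k0 * t))) \<longlongrightarrow> 0) at_top"
      using asym_psi[OF LT \<rho>nz[OF order_refl] evT] by blast
    obtain b where b: "{..b} \<subseteq> ?S 0" using Ivl_bot by blast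
    have bndB: "\<exists>C. \<forall>\<^sub>F t in at_bot. norm (w 0 t - complex_of_real k0) \<le> C / t\<^sup>2"
      using asym_bot by simp
    obtain LB where LB: "((\<lambda>t. oint (\<lambda>\<xi>. w 0 \<xi> - complex_of_real k0) (X 0) t) \<longlongrightarrow> LB) at_bot"
      using asym_bot_lim[OF Sc(1) w_cont[OF le0] X_in[OF le0] b bndB] by blast
    have evB: "\<forall>\<^sub>F t in at_bot. \<psi>0 t = \<rho> 0 * exp (- \<i> * (oint (\<lambda>\<xi>. w 0 \<xi> - complex_of_real k0) (X 0) t
                 + complex_of_real k0 * complex_of_real (t - X 0)))"
      using eventually_le_at_bot[of b]
    proof eventually_elim
      case (elim t)
      then have tS: "t \<in> ?S 0" using b by auto
      have "oint (\<lambda>\<xi>. w 0 \<xi> - complex_of_real k0) (X 0) t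
            = oint (w 0) (X 0) t - oint (\<lambda>_. complex_of_real k0) (X 0) t"
        by (rule oint_diff[OF Sc(1) w_cont[OF le0] continuous_on_const X_in[OF le0] tS])
      then have "oint (w 0) (X 0) t = oint (\<lambda>\<xi>. w 0 \<xi> - complex_of_real k0) (X 0) t
                 + complex_of_real k0 * complex_of_real (t - X 0)"
        by (simp add: oint_const)
      then show ?case using \<psi>0_I[OF le0 tS] by simp
    qed
    obtain \<rho>m where \<rho>m: "\<rho>m \<noteq> 0" "((\<lambda>t. \<psi>0 t - \<rho>m * exp (- \<i> * complex_of_real (k0 * t))) \<longlongrightarrow> 0) at_bot"
      using asym_psi[OF LB \<rho>nz[OF le0] evB] by blast
    show ?thesis using \<rho>p \<rho>m by (intro exI[of _ \<rho>p] exI[of _ \<rho>m]) simp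
  qed
  have P3: "\<forall>j\<le>N. \<forall>y\<in>Ivl N x j. w j differentiable (at y) \<longrightarrow>
         (\<exists>\<psi>2. ((\<lambda>t. vector_derivative \<psi>0 (at t)) has_vector_derivative \<psi>2) (at y)
            \<and> - \<psi>2 + (- (w j y)\<^sup>2 - \<i> * vector_derivative (w j) (at y) + complex_of_real (k0\<^sup>2)) * \<psi>0 y
                = complex_of_real (k0\<^sup>2) * \<psi>0 y)"
  proof (intro allI impI ballI)
    fix j y assume j: "j \<le> N" and y: "y \<in> Ivl N x j" and wd: "w j differentiable (at y)"
    let ?w' = "vector_derivative (w j) (at y)"
    have dw: "(w j has_vector_derivative ?w') (at y)" using wd by (rule vector_derivative_works[THEN iffD1])
    have vd: "vector_derivative \<psi>0 (at u) = - \<i> * w j u * \<psi>0 u" if "u \<in> ?S j" for u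
      by (rule vector_derivative_at[OF dint[OF j that]])
    have d1: "((\<lambda>u. - \<i> * w j u * \<psi>0 u) has_vector_derivative
          ((- \<i> * w j y) * (- \<i> * w j y * \<psi>0 y) + (- \<i> * ?w') * \<psi>0 y)) (at y)"
      by (rule has_vector_derivative_mult[OF has_vector_derivative_mult_right[OF dw] dint[OF j y]])
    have d2: "((\<lambda>t. vector_derivative \<psi>0 (at t)) has_vector_derivative
          ((- \<i> * w j y) * (- \<i> * w j y * \<psi>0 y) + (- \<i> * ?w') * \<psi>0 y)) (at y)"
      by (rule has_vector_derivative_transform_within_open[OF d1 Sc(2) y]) (simp add: vd)
    show "\<exists>\<psi>2. ((\<lambda>t. vector_derivative \<psi>0 (at t)) has_vector_derivative \<psi>2) (at y)
            \<and> - \<psi>2 + (- (w j y)\<^sup>2 - \<i> * ?w' + complex_of_real (k0\<^sup>2)) * \<psi>0 y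
                = complex_of_real (k0\<^sup>2) * \<psi>0 y"
      by (rule exI, rule conjI[OF d2]) (simp add: algebra_simps power2_eq_square)
  qed
  show ?thesis using P1 P2 P3 by blast
qed

end
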